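(* Let $\theta$ be a comtrace alphabet. For all $D_1,D_2\in\mathsf{CDG}(\theta)$, the composition $D_1\circledcirc D_2$ is a cd-graph over $\theta$, i.e. $D_1\circledcirc D_2\in\mathsf{CDG}(\theta)$.
   Context: So-structures: $(X,\prec,\sqsubset)$ with (S1) $\neg(\alpha\sqsubset\alpha)$; (S2) $\alpha\prec\beta\Rightarrow\alpha\sqsubset\beta$; (S3) $\alpha\sqsubset\beta\sqsubset\gamma\wedge\alpha\neq\gamma\Rightarrow\alpha\sqsubset\gamma$; (S4) $(\alpha\sqsubset\beta\prec\gamma)\vee(\alpha\prec\beta\sqsubset\gamma)\Rightarrow\alpha\prec\gamma$. $\lozenge$-closure: $(X,R_1,R_2)^\lozenge:=(X,(R_1\cup R_2)^*\circ R_1\circ(R_1\cup R_2)^*,(R_1\cup R_2)^*\setminus\mathrm{id}_X)$ ($^*$ = reflexive transitive closure). Labeled relational structures are taken up to label-preserving isomorphism; $[\cdot]$ denotes the class. Comtrace alphabet: $\theta=(E,sim,ser)$, $E$ finite, $ser\subseteq sim\subseteq E\times E$, $sim$ irreflexive symmetric. Cd-graph over $\theta$: the class of a finite labeled relational structure $(X,\to,\dashrightarrow,\lambda)$, $\lambda:X\to E$, with $\to,\dashrightarrow$ irreflexive, $(X,\to,\dashrightarrow)^\lozenge$ an so-structure, and for all $\alpha\neq\beta$: (CD1) $(\lambda\alpha,\lambda\beta)\notin sim\Rightarrow\alpha\to\beta\vee\beta\to\alpha$; (CD2) $(\lambda\alpha,\lambda\beta)\notin ser\Rightarrow\alpha\to\beta\vee\beta\dashrightarrow\alpha$;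 (CD3) $\alpha\to\beta\Rightarrow(\lambda\alpha,\lambda\beta)\notin ser$; (CD4) $\alpha\dashrightarrow\beta\Rightarrow(\lambda\beta,\lambda\alpha)\notin ser$. $\mathsf{CDG}(\theta)$ is the set of these. Composition: for $D_i=[X_i,\to_i,\dashrightarrow_i,\lambda_i]$, $X_1,X_2$ disjoint, $D_1\circledcirc D_2:=[X_1\uplus X_2,\to,\dashrightarrow,\lambda_1\uplus\lambda_2]$ with $\to=\to_1\cup\to_2\cup\{(\alpha,\beta)\in X_1\times X_2:(\lambda\alpha,\lambda\beta)\notin ser\}$ and $\dashrightarrow=\dashrightarrow_1\cup\dashrightarrow_2\cup\{(\alpha,\beta)\in X_1\times X_2:(\lambda\beta,\lambda\alpha)\notin ser\}$. *)

theory Defs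
  imports Main
begin

definition rtc_on :: "'a set \<Rightarrow> ('a \<times> 'a) set \<Rightarrow> ('a \<times> 'a) set" where
  "rtc_on X R = R\<^sup>+ \<union> Id_on X"

definition so_structure :: "'a set \<Rightarrow> ('a \<times> 'a) set \<Rightarrow> ('a \<times> 'a) set \<Rightarrow> bool" where
  "so_structure X prec sqs \<longleftrightarrow>
     prec \<subseteq> X \<times> X \<and> sqs \<subseteq> X \<times> X \<and>
     (\<forall>a\<in>X. (a, a) \<notin> sqs) \<and>
     (\<forall>a\<in>X. \<forall>b\<in>X. (a, b) \<in> prec \<longrightarrow> (a, b) \<in> sqs) \<and>
     (\<forall>a\<in>X. \<forall>b\<in>X. \<forall>c\<in>X. (a, b) \<in> sqs \<and> (b, c) \<in> sqs \<and> a \<noteq> c \<longrightarrow> (a, c) \<in> sqs) \<and>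
     (\<forall>a\<in>X. \<forall>b\<in>X. \<forall>c\<in>X.
        ((a, b) \<in> sqs \<and> (b, c) \<in> prec) \<or> ((a, b) \<in> prec \<and> (b, c) \<in> sqs) \<longrightarrow> (a, c) \<in> prec)"

definition diamond_prec :: "'a set \<Rightarrow> ('a \<times> 'a) set \<Rightarrow> ('a \<times> 'a) set \<Rightarrow> ('a \<times> 'a) set" where
  "diamond_prec X R1 R2 = rtc_on X (R1 \<union> R2) O R1 O rtc_on X (R1 \<union> R2)"

definition diamond_sqs :: "'a set \<Rightarrow> ('a \<times> 'a) set \<Rightarrow> ('a \<times> 'a) set \<Rightarrow> ('a \<times> 'a) set" where
  "diamond_sqs X R1 R2 = rtc_on X (R1 \<union> R2) - Id_on X"

definition comtrace_alphabet :: "'e set \<Rightarrow> ('e \<times> 'e) set \<Rightarrow> ('e \<times> 'e) set \<Rightarrow> bool" where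
  "comtrace_alphabet E sim ser \<longleftrightarrow>
     finite E \<and> ser \<subseteq> sim \<and> sim \<subseteq> E \<times> E \<and> irrefl sim \<and> sym sim"

text \<open>A finite labeled relational structure (X, arr, dsh, lab) is (a representative of) a
  cd-graph over the comtrace alphabet (E, sim, ser).\<close>
definition is_cdg :: "'e set \<Rightarrow> ('e \<times> 'e) set \<Rightarrow> ('e \<times> 'e) set \<Rightarrow>
    'a set \<Rightarrow> ('a \<times> 'a) set \<Rightarrow> ('a \<times> 'a) set \<Rightarrow> ('a \<Rightarrow> 'e) \<Rightarrow> bool" where
  "is_cdg E sim ser X arr dsh lab \<longleftrightarrow>
     finite X \<and> arr \<subseteq> X \<times> X \<and> dsh \<subseteq> X \<times> X \<and> (\<forall>x\<in>X. lab x \<in> E) \<and>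
     (\<forall>a\<in>X. (a, a) \<notin> arr) \<and> (\<forall>a\<in>X. (a, a) \<notin> dsh) \<and>
     so_structure X (diamond_prec X arr dsh) (diamond_sqs X arr dsh) \<and>
     (\<forall>a\<in>X. \<forall>b\<in>X. a \<noteq> b \<longrightarrow>
        ((lab a, lab b) \<notin> sim \<longrightarrow> (a, b) \<in> arr \<or> (b, a) \<in> arr) \<and>
        ((lab a, lab b) \<notin> ser \<longrightarrow> (a, b) \<in> arr \<or> (b, a) \<in> dsh) \<and>
        ((a, b) \<in> arr \<longrightarrow> (lab a, lab b) \<notin> ser) \<and>
        ((a, b) \<in> dsh \<longrightarrow> (lab b, lab a) \<notin> ser))"

text \<open>Composition of representatives with disjoint carriers.\<close>
definition comp_lab :: "'a set \<Rightarrow> ('a \<Rightarrow> 'e) \<Rightarrow> ('a \<Rightarrow> 'e) \<Rightarrow> 'a \<Rightarrow> 'e" where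
  "comp_lab X1 lab1 lab2 = (\<lambda>x. if x \<in> X1 then lab1 x else lab2 x)"

definition comp_arr :: "('e \<times> 'e) set \<Rightarrow> 'a set \<Rightarrow> 'a set \<Rightarrow> ('a \<times> 'a) set \<Rightarrow> ('a \<times> 'a) set \<Rightarrow>
    ('a \<Rightarrow> 'e) \<Rightarrow> ('a \<Rightarrow> 'e) \<Rightarrow> ('a \<times> 'a) set" where
  "comp_arr ser X1 X2 arr1 arr2 lab1 lab2 =
     arr1 \<union> arr2 \<union> {(a, b). a \<in> X1 \<and> b \<in> X2 \<and> (comp_lab X1 lab1 lab2 a, comp_lab X1 lab1 lab2 b) \<notin> ser}"

definition comp_dsh :: "('e \<times> 'e) set \<Rightarrow> 'a set \<Rightarrow> 'a set \<Rightarrow> ('a \<times> 'a) set \<Rightarrow> ('a \<times> 'a) set \<Rightarrow>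
    ('a \<Rightarrow> 'e) \<Rightarrow> ('a \<Rightarrow> 'e) \<Rightarrow> ('a \<times> 'a) set" where
  "comp_dsh ser X1 X2 dsh1 dsh2 lab1 lab2 =
     dsh1 \<union> dsh2 \<union> {(a, b). a \<in> X1 \<and> b \<in> X2 \<and> (comp_lab X1 lab1 lab2 b, comp_lab X1 lab1 lab2 a) \<notin> ser}"

end

theory Submission
  imports Defs
begin

lemma rtc_on_sub: "R \<subseteq> X \<times> X \<Longrightarrow> rtc_on X R \<subseteq> X \<times> X"
  unfolding rtc_on_def using trancl_subset_Sigma by blast

lemma rtc_on_rtrancl: "rtc_on X R \<subseteq> R\<^sup>*"
  unfolding rtc_on_def by (auto dest: trancl_into_rtrancl)

lemma rtrancl_rtc_on: "(x,y) \<in> R\<^sup>* \<Longrightarrow> x \<in> X \<Longrightarrow> (x,y) \<in> rtc_on X R"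
  unfolding rtc_on_def by (auto simp: rtrancl_eq_or_trancl)

lemma rtc_on_trans: "R \<subseteq> X \<times> X \<Longrightarrow> (a,b) \<in> rtc_on X R \<Longrightarrow> (b,c) \<in> rtc_on X R \<Longrightarrow> (a,c) \<in> rtc_on X R"
  unfolding rtc_on_def by (auto)

lemma R_rtc_on: "(a,b) \<in> R \<Longrightarrow> (a,b) \<in> rtc_on X R"
  unfolding rtc_on_def by auto

lemma prec_sub_rtc:
  assumes "R1 \<subseteq> X \<times> X" "R2 \<subseteq> X \<times> X" "(a,b) \<in> diamond_prec X R1 R2"
  shows "(a,b) \<in> rtc_on X (R1 \<union> R2)"
proof -
  from assms(3) obtain c d where "(a,c) \<in> rtc_on X (R1 \<union> R2)" "(c,d) \<in> R1" "(d,b) \<in> rtc_on X (R1 \<union> R2)"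
    unfolding diamond_prec_def by blast
  moreover have "(c,d) \<in> rtc_on X (R1 \<union> R2)" using \<open>(c,d) \<in> R1\<close> by (intro R_rtc_on) auto
  moreover have "R1 \<union> R2 \<subseteq> X \<times> X" using assms by auto
  ultimately show ?thesis using rtc_on_trans[of "R1 \<union> R2" X] by blast
qed

lemma so_from_irrefl:
  assumes r1: "R1 \<subseteq> X \<times> X" and r2: "R2 \<subseteq> X \<times> X"
    and irr: "\<forall>a. (a,a) \<notin> diamond_prec X R1 R2"
  shows "so_structure X (diamond_prec X R1 R2) (diamond_sqs X R1 R2)"
proof -
  have S: "R1 \<union> R2 \<subseteq> X \<times> X" using r1 r2 by auto
  have rs: "rtc_on X (R1 \<union> R2) \<subseteq> X \<times> X" using rtc_on_sub[OF S] .
  have ps: "diamond_prec X R1 R2 \<subseteq> X \<times> X"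
    using prec_sub_rtc[OF r1 r2] rs by auto
  have s2: "\<And>a b. (a,b) \<in> diamond_prec X R1 R2 \<Longrightarrow> (a,b) \<in> diamond_sqs X R1 R2"
  proof -
    fix a b assume h: "(a,b) \<in> diamond_prec X R1 R2"
    have "a \<noteq> b" using h irr by blast
    then show "(a,b) \<in> diamond_sqs X R1 R2" unfolding diamond_sqs_def
      using prec_sub_rtc[OF r1 r2 h] by (auto simp: Id_on_def)
  qed
  have s4a: "\<And>a b c. (a,b) \<in> rtc_on X (R1 \<union> R2) \<Longrightarrow> (b,c) \<in> diamond_prec X R1 R2 \<Longrightarrow> (a,c) \<in> diamond_prec X R1 R2"
  proof -
    fix a b c assume "(a,b) \<in> rtc_on X (R1 \<union> R2)" "(b,c) \<in> diamond_prec X R1 R2"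
    then obtain d e where "(b,d) \<in> rtc_on X (R1 \<union> R2)" "(d,e) \<in> R1" "(e,c) \<in> rtc_on X (R1 \<union> R2)"
      unfolding diamond_prec_def by blast
    with \<open>(a,b) \<in> rtc_on X (R1 \<union> R2)\<close> have "(a,d) \<in> rtc_on X (R1 \<union> R2)" using rtc_on_trans[OF S] by blast
    then show "(a,c) \<in> diamond_prec X R1 R2" unfolding diamond_prec_def
      using \<open>(d,e) \<in> R1\<close> \<open>(e,c) \<in> rtc_on X (R1 \<union> R2)\<close> by blast
  qed
  have s4b: "\<And>a b c. (a,b) \<in> diamond_prec X R1 R2 \<Longrightarrow> (b,c) \<in> rtc_on X (R1 \<union> R2) \<Longrightarrow> (a,c) \<in> diamond_prec X R1 R2"
  proof -
    fix a b c assume "(a,b) \<in> diamond_prec X R1 R2" "(b,c) \<in> rtc_on X (R1 \<union> R2)"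
    then obtain d e where "(a,d) \<in> rtc_on X (R1 \<union> R2)" "(d,e) \<in> R1" "(e,b) \<in> rtc_on X (R1 \<union> R2)"
      unfolding diamond_prec_def by blast
    with \<open>(b,c) \<in> rtc_on X (R1 \<union> R2)\<close> have "(e,c) \<in> rtc_on X (R1 \<union> R2)" using rtc_on_trans[OF S] by blast
    then show "(a,c) \<in> diamond_prec X R1 R2" unfolding diamond_prec_def
      using \<open>(d,e) \<in> R1\<close> \<open>(a,d) \<in> rtc_on X (R1 \<union> R2)\<close> by blast
  qed
  show ?thesis unfolding so_structure_def
  proof (intro conjI)
    show "diamond_prec X R1 R2 \<subseteq> X \<times> X" by (fact ps)
    show "diamond_sqs X R1 R2 \<subseteq> X \<times> X" unfolding diamond_sqs_def using rs by auto
    show "\<forall>a\<in>X. (a, a) \<notin> diamond_sqs X R1 R2" unfolding diamond_sqs_def by auto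
    show "\<forall>a\<in>X. \<forall>b\<in>X. (a, b) \<in> diamond_prec X R1 R2 \<longrightarrow> (a, b) \<in> diamond_sqs X R1 R2" using s2 by blast
    show "\<forall>a\<in>X. \<forall>b\<in>X. \<forall>c\<in>X. (a, b) \<in> diamond_sqs X R1 R2 \<and> (b, c) \<in> diamond_sqs X R1 R2 \<and> a \<noteq> c \<longrightarrow> (a, c) \<in> diamond_sqs X R1 R2"
      unfolding diamond_sqs_def using rtc_on_trans[OF S] by blast
    show "\<forall>a\<in>X. \<forall>b\<in>X. \<forall>c\<in>X. (a, b) \<in> diamond_sqs X R1 R2 \<and> (b, c) \<in> diamond_prec X R1 R2 \<or> (a, b) \<in> diamond_prec X R1 R2 \<and> (b, c) \<in> diamond_sqs X R1 R2 \<longrightarrow> (a, c) \<in> diamond_prec X R1 R2"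
      unfolding diamond_sqs_def using s4a s4b by blast
  qed
qed

lemma irrefl_from_so:
  assumes "so_structure X (diamond_prec X R1 R2) (diamond_sqs X R1 R2)"
  shows "(a,a) \<notin> diamond_prec X R1 R2"
  using assms unfolding so_structure_def by blast

lemma back_X1:
  assumes "(x,y) \<in> S\<^sup>*" "\<And>u v. (u,v) \<in> S \<Longrightarrow> v \<in> X1 \<Longrightarrow> u \<in> X1 \<and> (u,v) \<in> S1"
  shows "y \<in> X1 \<Longrightarrow> x \<in> X1 \<and> (x,y) \<in> S1\<^sup>*"
  using assms(1)
proof (induction rule: rtrancl_induct)
  case base then show ?case by auto
next
  case (step y z)
  then show ?case using assms(2)[of y z] by (meson rtrancl.rtrancl_into_rtrancl)
qed

lemma fwd_X2:
  assumes "(x,y) \<in> S\<^sup>*" "\<And>u v. (u,v) \<in> S \<Longrightarrow> u \<in> X2 \<Longrightarrow> v \<in> X2 \<and> (u,v) \<in> S2"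
  shows "x \<in> X2 \<Longrightarrow> y \<in> X2 \<and> (x,y) \<in> S2\<^sup>*"
  using assms(1)
proof (induction rule: rtrancl_induct)
  case base then show ?case by auto
next
  case (step y z)
  then show ?case using assms(2)[of y z] by (meson rtrancl.rtrancl_into_rtrancl)
qed

theorem mainTheorem16:
  fixes E :: "'e set" and sim ser :: "('e \<times> 'e) set"
    and X1 X2 :: "'a set" and arr1 dsh1 arr2 dsh2 :: "('a \<times> 'a) set"
    and lab1 lab2 :: "'a \<Rightarrow> 'e"
  assumes "comtrace_alphabet E sim ser"
    and "is_cdg E sim ser X1 arr1 dsh1 lab1"
    and "is_cdg E sim ser X2 arr2 dsh2 lab2"
    and "X1 \<inter> X2 = {}"
  shows "is_cdg E sim ser (X1 \<union> X2)
           (comp_arr ser X1 X2 arr1 arr2 lab1 lab2)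
           (comp_dsh ser X1 X2 dsh1 dsh2 lab1 lab2)
           (comp_lab X1 lab1 lab2)"
proof -
  let ?X = "X1 \<union> X2"
  let ?A = "comp_arr ser X1 X2 arr1 arr2 lab1 lab2"
  let ?D = "comp_dsh ser X1 X2 dsh1 dsh2 lab1 lab2"
  let ?l = "comp_lab X1 lab1 lab2"
  note A = assms(1)[unfolded comtrace_alphabet_def]
  have fin1: "finite X1" and A1: "arr1 \<subseteq> X1 \<times> X1" and D1: "dsh1 \<subseteq> X1 \<times> X1"
    and E1: "\<forall>x\<in>X1. lab1 x \<in> E" and iA1: "\<forall>a\<in>X1. (a, a) \<notin> arr1" and iD1: "\<forall>a\<in>X1. (a, a) \<notin> dsh1"
    and so1: "so_structure X1 (diamond_prec X1 arr1 dsh1) (diamond_sqs X1 arr1 dsh1)"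
    and cd1: "\<forall>a\<in>X1. \<forall>b\<in>X1. a \<noteq> b \<longrightarrow>
        ((lab1 a, lab1 b) \<notin> sim \<longrightarrow> (a, b) \<in> arr1 \<or> (b, a) \<in> arr1) \<and>
        ((lab1 a, lab1 b) \<notin> ser \<longrightarrow> (a, b) \<in> arr1 \<or> (b, a) \<in> dsh1) \<and>
        ((a, b) \<in> arr1 \<longrightarrow> (lab1 a, lab1 b) \<notin> ser) \<and>
        ((a, b) \<in> dsh1 \<longrightarrow> (lab1 b, lab1 a) \<notin> ser)"
    using assms(2) unfolding is_cdg_def by simp_all
  have fin2: "finite X2" and A2: "arr2 \<subseteq> X2 \<times> X2" and D2: "dsh2 \<subseteq> X2 \<times> X2"
    and E2: "\<forall>x\<in>X2. lab2 x \<in> E" and iA2: "\<forall>a\<in>X2. (a, a) \<notin> arr2" and iD2: "\<forall>a\<in>X2. (a, a) \<notin> dsh2"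
    and so2: "so_structure X2 (diamond_prec X2 arr2 dsh2) (diamond_sqs X2 arr2 dsh2)"
    and cd2: "\<forall>a\<in>X2. \<forall>b\<in>X2. a \<noteq> b \<longrightarrow>
        ((lab2 a, lab2 b) \<notin> sim \<longrightarrow> (a, b) \<in> arr2 \<or> (b, a) \<in> arr2) \<and>
        ((lab2 a, lab2 b) \<notin> ser \<longrightarrow> (a, b) \<in> arr2 \<or> (b, a) \<in> dsh2) \<and>
        ((a, b) \<in> arr2 \<longrightarrow> (lab2 a, lab2 b) \<notin> ser) \<and>
        ((a, b) \<in> dsh2 \<longrightarrow> (lab2 b, lab2 a) \<notin> ser)"
    using assms(3) unfolding is_cdg_def by simp_all
  have sersim: "ser \<subseteq> sim" and symsim: "sym sim" using assms(1) unfolding comtrace_alphabet_def by auto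
  note dj = assms(4)
  have l1: "\<And>x. x \<in> X1 \<Longrightarrow> ?l x = lab1 x" by (simp add: comp_lab_def)
  have l2: "\<And>x. x \<in> X2 \<Longrightarrow> ?l x = lab2 x" using dj by (auto simp: comp_lab_def)
  have Asub: "?A \<subseteq> ?X \<times> ?X" using A1 A2 by (auto simp: comp_arr_def)
  have Dsub: "?D \<subseteq> ?X \<times> ?X" using D1 D2 by (auto simp: comp_dsh_def)
  have irr: "\<forall>a. (a,a) \<notin> diamond_prec ?X ?A ?D"
  proof (intro allI notI)
    fix a assume "(a,a) \<in> diamond_prec ?X ?A ?D"
    then obtain b c where ab0: "(a,b) \<in> rtc_on ?X (?A \<union> ?D)" and bc: "(b,c) \<in> ?A" and ca0: "(c,a) \<in> rtc_on ?X (?A \<union> ?D)"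
      unfolding diamond_prec_def by blast
    have ab: "(a,b) \<in> (?A \<union> ?D)\<^sup>*" using ab0 rtc_on_rtrancl by blast
    have ca: "(c,a) \<in> (?A \<union> ?D)\<^sup>*" using ca0 rtc_on_rtrancl by blast
    have "?A \<union> ?D \<subseteq> ?X \<times> ?X" using Asub Dsub by blast
    hence aX: "a \<in> ?X" using ab0 rtc_on_sub by blast
    have b1: "\<And>u v. (u,v) \<in> ?A \<union> ?D \<Longrightarrow> v \<in> X1 \<Longrightarrow> u \<in> X1 \<and> (u,v) \<in> arr1 \<union> dsh1"
      using A1 A2 D1 D2 dj by (auto simp: comp_arr_def comp_dsh_def)
    have f2: "\<And>u v. (u,v) \<in> ?A \<union> ?D \<Longrightarrow> u \<in> X2 \<Longrightarrow> v \<in> X2 \<and> (u,v) \<in> arr2 \<union> dsh2"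
      using A1 A2 D1 D2 dj by (auto simp: comp_arr_def comp_dsh_def)
    show False
    proof (cases "a \<in> X1")
      case True
      from back_X1[OF ca b1 True] have c1: "c \<in> X1" "(c,a) \<in> (arr1 \<union> dsh1)\<^sup>*" by auto
      have b1': "b \<in> X1" "(b,c) \<in> arr1" using bc c1 A1 A2 dj by (auto simp: comp_arr_def)
      from back_X1[OF ab b1 b1'(1)] have "(a,b) \<in> (arr1 \<union> dsh1)\<^sup>*" by auto
      hence "(a,a) \<in> diamond_prec X1 arr1 dsh1" unfolding diamond_prec_def
        using rtrancl_rtc_on[of _ _ _ X1] True c1 b1' by blast
      thus False using irrefl_from_so[OF so1] by blast
    next
      case False
      hence a2: "a \<in> X2" using aX by auto
      from fwd_X2[OF ab f2 a2] have b2: "b \<in> X2" "(a,b) \<in> (arr2 \<union> dsh2)\<^sup>*" by auto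
      have c2: "c \<in> X2" "(b,c) \<in> arr2" using bc b2 A1 A2 dj by (auto simp: comp_arr_def)
      from fwd_X2[OF ca f2 c2(1)] have "(c,a) \<in> (arr2 \<union> dsh2)\<^sup>*" by auto
      hence "(a,a) \<in> diamond_prec X2 arr2 dsh2" unfolding diamond_prec_def
        using rtrancl_rtc_on[of _ _ _ X2] a2 b2 c2 by blast
      thus False using irrefl_from_so[OF so2] by blast
    qed
  qed
  have so: "so_structure ?X (diamond_prec ?X ?A ?D) (diamond_sqs ?X ?A ?D)"
    by (rule so_from_irrefl[OF Asub Dsub irr])
  have cd: "\<forall>a\<in>?X. \<forall>b\<in>?X. a \<noteq> b \<longrightarrow>
        ((?l a, ?l b) \<notin> sim \<longrightarrow> (a, b) \<in> ?A \<or> (b, a) \<in> ?A) \<and>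
        ((?l a, ?l b) \<notin> ser \<longrightarrow> (a, b) \<in> ?A \<or> (b, a) \<in> ?D) \<and>
        ((a, b) \<in> ?A \<longrightarrow> (?l a, ?l b) \<notin> ser) \<and>
        ((a, b) \<in> ?D \<longrightarrow> (?l b, ?l a) \<notin> ser)"
  proof (intro ballI impI)
    fix a b assume aX: "a \<in> ?X" and bX: "b \<in> ?X" and ne: "a \<noteq> b"
    have symm: "\<And>x y. (x,y) \<notin> sim \<Longrightarrow> (y,x) \<notin> sim" using symsim by (meson symD)
    consider "a \<in> X1" "b \<in> X1" | "a \<in> X1" "b \<in> X2" | "a \<in> X2" "b \<in> X1" | "a \<in> X2" "b \<in> X2"
      using aX bX by blast
    then show "((?l a, ?l b) \<notin> sim \<longrightarrow> (a, b) \<in> ?A \<or> (b, a) \<in> ?A) \<and>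
        ((?l a, ?l b) \<notin> ser \<longrightarrow> (a, b) \<in> ?A \<or> (b, a) \<in> ?D) \<and>
        ((a, b) \<in> ?A \<longrightarrow> (?l a, ?l b) \<notin> ser) \<and>
        ((a, b) \<in> ?D \<longrightarrow> (?l b, ?l a) \<notin> ser)"
    proof cases
      case 1
      have "a \<notin> X2" "b \<notin> X2" using 1 dj by auto
      then show ?thesis using cd1[rule_format, OF 1 ne] A2 D2 l1[OF 1(1)] l1[OF 1(2)]
        unfolding comp_arr_def comp_dsh_def by auto
    next
      case 2
      have "a \<notin> X2" "b \<notin> X1" using 2 dj by auto
      then show ?thesis using 2 A1 A2 D1 D2 sersim l1[OF 2(1)] l2[OF 2(2)]
        unfolding comp_arr_def comp_dsh_def by auto
    next
      case 3
      have "a \<notin> X1" "b \<notin> X2" using 3 dj by auto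
      then show ?thesis using 3 A1 A2 D1 D2 sersim l2[OF 3(1)] l1[OF 3(2)] symm[of "lab2 a" "lab1 b"]
        unfolding comp_arr_def comp_dsh_def by auto
    next
      case 4
      have "a \<notin> X1" "b \<notin> X1" using 4 dj by auto
      then show ?thesis using cd2[rule_format, OF 4 ne] A1 D1 l2[OF 4(1)] l2[OF 4(2)]
        unfolding comp_arr_def comp_dsh_def by auto
    qed
  qed
  show ?thesis unfolding is_cdg_def
  proof (intro conjI)
    show "finite ?X" using fin1 fin2 by auto
    show "?A \<subseteq> ?X \<times> ?X" by (fact Asub)
    show "?D \<subseteq> ?X \<times> ?X" by (fact Dsub)
    show "\<forall>x\<in>?X. ?l x \<in> E" using E1 E2 l1 l2 by auto
    show "\<forall>a\<in>?X. (a, a) \<notin> ?A" using iA1 iA2 A1 A2 D1 D2 dj by (auto simp: comp_arr_def)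
    show "\<forall>a\<in>?X. (a, a) \<notin> ?D" using iD1 iD2 A1 A2 D1 D2 dj by (auto simp: comp_dsh_def)
  qed (fact so, fact cd)
qed

end
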